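(* Let $A$ be a linear space with two multiplications $\cdot,\ast:A\otimes A\to A$ and two commuting bijective linear maps $\alpha,\beta:A\to A$ that are multiplicative with respect to both $\cdot$ and $\ast$, such that $(A,\cdot,\alpha,\beta)$ is a BiHom-commutative algebra. Then $(x\cdot\beta(y))\ast\alpha\beta(z)=(x\ast\beta(z))\cdot\alpha\beta(y)$ holds for all $x,y,z\in A$ if and only if $\alpha(x)\cdot(y\ast z)=(x\cdot y)\ast\beta(z)$ holds for all $x,y,z\in A$.
   Context: Work over a field. A BiHom-associative algebra is a 4-tuple $(A,\cdot,\alpha,\beta)$ with $\alpha,\beta:A\to A$ commuting linear maps, multiplicative for $\cdot$, and $\alpha(x)\cdot(y\cdot z)=(x\cdot y)\cdot\beta(z)$ for all $x,y,z$; it is BiHom-commutative if moreover $\beta(a)\cdot\alpha(b)=\beta(b)\cdot\alpha(a)$ for all $a,b$. *)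

theory Defs
  imports Main "HOL.Vector_Spaces"
begin

text \<open>A multiplication A (x) A -> A is a bilinear map.\<close>

definition bilinear_map :: "('k::field \<Rightarrow> 'a::ab_group_add \<Rightarrow> 'a) \<Rightarrow> ('a \<Rightarrow> 'a \<Rightarrow> 'a) \<Rightarrow> bool" where
  "bilinear_map scale m \<longleftrightarrow>
     (\<forall>y. Vector_Spaces.linear scale scale (\<lambda>x. m x y)) \<and>
     (\<forall>x. Vector_Spaces.linear scale scale (\<lambda>y. m x y))"

definition multiplicative :: "('a \<Rightarrow> 'a \<Rightarrow> 'a) \<Rightarrow> ('a \<Rightarrow> 'a) \<Rightarrow> bool" where
  "multiplicative m f \<longleftrightarrow> (\<forall>x y. f (m x y) = m (f x) (f y))"

definition BiHom_associative ::
  "('k::field \<Rightarrow> 'a::ab_group_add \<Rightarrow> 'a) \<Rightarrow> ('a \<Rightarrow> 'a \<Rightarrow> 'a) \<Rightarrow> ('a \<Rightarrow> 'a) \<Rightarrow> ('a \<Rightarrow> 'a) \<Rightarrow> bool" where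
  "BiHom_associative scale m \<alpha> \<beta> \<longleftrightarrow>
     bilinear_map scale m \<and>
     Vector_Spaces.linear scale scale \<alpha> \<and> Vector_Spaces.linear scale scale \<beta> \<and>
     \<alpha> \<circ> \<beta> = \<beta> \<circ> \<alpha> \<and>
     multiplicative m \<alpha> \<and> multiplicative m \<beta> \<and>
     (\<forall>x y z. m (\<alpha> x) (m y z) = m (m x y) (\<beta> z))"

definition BiHom_commutative ::
  "('k::field \<Rightarrow> 'a::ab_group_add \<Rightarrow> 'a) \<Rightarrow> ('a \<Rightarrow> 'a \<Rightarrow> 'a) \<Rightarrow> ('a \<Rightarrow> 'a) \<Rightarrow> ('a \<Rightarrow> 'a) \<Rightarrow> bool" where
  "BiHom_commutative scale m \<alpha> \<beta> \<longleftrightarrow>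
     BiHom_associative scale m \<alpha> \<beta> \<and>
     (\<forall>a b. m (\<beta> a) (\<alpha> b) = m (\<beta> b) (\<alpha> a))"

end

theory Submission
  imports Defs
begin

theorem lemma3p2:
  fixes scale :: "'k::field \<Rightarrow> 'a::ab_group_add \<Rightarrow> 'a"
    and dot star :: "'a \<Rightarrow> 'a \<Rightarrow> 'a"
    and \<alpha> \<beta> :: "'a \<Rightarrow> 'a"
  assumes "vector_space scale"
    and "bilinear_map scale dot"
    and "bilinear_map scale star"
    and "Vector_Spaces.linear scale scale \<alpha>"
    and "Vector_Spaces.linear scale scale \<beta>"
    and "bij \<alpha>" and "bij \<beta>"
    and "\<alpha> \<circ> \<beta> = \<beta> \<circ> \<alpha>"
    and "multiplicative dot \<alpha>" and "multiplicative dot \<beta>"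
    and "multiplicative star \<alpha>" and "multiplicative star \<beta>"
    and "BiHom_commutative scale dot \<alpha> \<beta>"
  shows "(\<forall>x y z. star (dot x (\<beta> y)) (\<alpha> (\<beta> z)) = dot (star x (\<beta> z)) (\<alpha> (\<beta> y)))
     \<longleftrightarrow> (\<forall>x y z. dot (\<alpha> x) (star y z) = star (dot x y) (\<beta> z))"
proof -
  define ai where "ai = inv \<alpha>"
  define bi where "bi = inv \<beta>"
  have a1: "\<And>x. \<alpha> (ai x) = x" unfolding ai_def using assms(6) by (simp add: bij_is_surj surj_f_inv_f)
  have b1: "\<And>x. \<beta> (bi x) = x" unfolding bi_def using assms(7) by (simp add: bij_is_surj surj_f_inv_f)
  have ab: "\<And>x. \<alpha> (\<beta> x) = \<beta> (\<alpha> x)" using assms(8) by (metis comp_apply)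
  have comm: "\<And>a b. dot (\<beta> a) (\<alpha> b) = dot (\<beta> b) (\<alpha> a)"
    using assms(13) unfolding BiHom_commutative_def by blast
  have sa: "\<And>x y. \<alpha> (star x y) = star (\<alpha> x) (\<alpha> y)" using assms(11) unfolding multiplicative_def by blast
  have sb: "\<And>x y. \<beta> (star x y) = star (\<beta> x) (\<beta> y)" using assms(12) unfolding multiplicative_def by blast
  have abi: "\<And>x. \<alpha> (bi x) = bi (\<alpha> x)"
    by (metis ab b1 assms(7) bij_is_inj injD)
  have bai: "\<And>x. \<beta> (ai x) = ai (\<beta> x)"
    by (metis ab a1 assms(6) bij_is_inj injD)
  show ?thesis
  proof
    assume P: "\<forall>x y z. star (dot x (\<beta> y)) (\<alpha> (\<beta> z)) = dot (star x (\<beta> z)) (\<alpha> (\<beta> y))"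
    show "\<forall>x y z. dot (\<alpha> x) (star y z) = star (dot x y) (\<beta> z)"
    proof (intro allI)
      fix X Y Z
      have "dot (\<alpha> X) (star Y Z) = dot (\<beta> (\<beta> (bi (bi (\<alpha> X))))) (\<alpha> (star (ai Y) (ai Z)))"
        by (simp add: b1 sa a1)
      also have "\<dots> = dot (\<beta> (star (ai Y) (ai Z))) (\<alpha> (\<beta> (bi (bi (\<alpha> X)))))"
        by (rule comm)
      also have "\<dots> = dot (star (\<beta> (ai Y)) (\<beta> (ai Z))) (\<alpha> (\<beta> (bi (bi (\<alpha> X)))))"
        by (simp add: sb)
      also have "\<dots> = star (dot (\<beta> (ai Y)) (\<beta> (bi (bi (\<alpha> X))))) (\<alpha> (\<beta> (ai Z)))"
        using P by metis
      also have "\<dots> = star (dot (\<beta> (ai Y)) (\<alpha> (bi X))) (\<beta> Z)"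
        by (simp add: b1 abi ab a1)
      also have "\<dots> = star (dot X Y) (\<beta> Z)"
        by (simp add: comm[of "ai Y" "bi X"] b1 a1)
      finally show "dot (\<alpha> X) (star Y Z) = star (dot X Y) (\<beta> Z)" .
    qed
  next
    assume Q: "\<forall>x y z. dot (\<alpha> x) (star y z) = star (dot x y) (\<beta> z)"
    show "\<forall>x y z. star (dot x (\<beta> y)) (\<alpha> (\<beta> z)) = dot (star x (\<beta> z)) (\<alpha> (\<beta> y))"
    proof (intro allI)
      fix x y z
      have "dot (star x (\<beta> z)) (\<alpha> (\<beta> y)) = dot (\<beta> (star (bi x) z)) (\<alpha> (\<beta> y))"
        by (simp add: sb b1)
      also have "\<dots> = dot (\<beta> (\<beta> y)) (\<alpha> (star (bi x) z))" by (rule comm)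
      also have "\<dots> = dot (\<alpha> (ai (\<beta> (\<beta> y)))) (star (\<alpha> (bi x)) (\<alpha> z))"
        by (simp add: a1 sa)
      also have "\<dots> = star (dot (ai (\<beta> (\<beta> y))) (\<alpha> (bi x))) (\<beta> (\<alpha> z))"
        using Q by blast
      also have "\<dots> = star (dot (\<beta> (ai (\<beta> y))) (\<alpha> (bi x))) (\<alpha> (\<beta> z))"
        by (simp add: bai ab)
      also have "\<dots> = star (dot x (\<beta> y)) (\<alpha> (\<beta> z))"
        by (simp add: comm[of "ai (\<beta> y)" "bi x"] b1 a1)
      finally show "star (dot x (\<beta> y)) (\<alpha> (\<beta> z)) = dot (star x (\<beta> z)) (\<alpha> (\<beta> y))" by simp
    qed
  qed
qed

end
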